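(* Let $X=[0,1]$, let $\Gamma$ be the group of orientation-preserving self-homeomorphisms of $[0,1]$ acting by application, and let $I$ be the ideal generated by the countable closed subsets of $[0,1]$ (i.e. subsets of countable closed sets). Then $\Gamma\curvearrowright X, I$ is $\sigma$-complete.
   Context: For a group $\Gamma$ acting on $X$, an invariant ideal $I$ on $X$ and $a\subseteq X$, $\mathrm{pstab}(a)=\{\gamma\in\Gamma:\gamma\cdot x=x\ \forall x\in a\}$ and $\gamma\cdot b=\{\gamma\cdot x:x\in b\}$. The dynamical ideal is $\sigma$-complete if for every $a\in I$ and every sequence $\langle b_n:n\in\omega\rangle$ of sets in $I$ there are $\gamma_n\in\mathrm{pstab}(a)$ with $\bigcup_n\gamma_n\cdot b_n\in I$. *)

theory Defs
  imports "HOL-Analysis.Analysis"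
begin

definition pstab :: "'g set \<Rightarrow> ('g \<Rightarrow> 'x \<Rightarrow> 'x) \<Rightarrow> 'x set \<Rightarrow> 'g set" where
  "pstab G act a = {g \<in> G. \<forall>x\<in>a. act g x = x}"

definition sigma_complete :: "'g set \<Rightarrow> ('g \<Rightarrow> 'x \<Rightarrow> 'x) \<Rightarrow> ('x set \<Rightarrow> bool) \<Rightarrow> bool" where
  "sigma_complete G act I \<longleftrightarrow>
     (\<forall>a b. I a \<longrightarrow> (\<forall>n::nat. I (b n)) \<longrightarrow>
        (\<exists>g. (\<forall>n. g n \<in> pstab G act a) \<and> I (\<Union>n. act (g n) ` b n)))"

text \<open>Orientation-preserving self-homeomorphisms of [0,1], as functions real to real
  (values outside [0,1] are irrelevant).\<close>

definition OPHomeo01 :: "(real \<Rightarrow> real) set" where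
  "OPHomeo01 = {f. (\<exists>g. homeomorphism {0..1} {0..1} f g) \<and> strict_mono_on {0..1} f}"

definition CCIdeal :: "real set \<Rightarrow> bool" where
  "CCIdeal a \<longleftrightarrow> a \<subseteq> {0..1} \<and> (\<exists>c. c \<subseteq> {0..1} \<and> countable c \<and> closed c \<and> a \<subseteq> c)"

end

theory Submission
  imports Defs
begin


definition pl :: "real \<Rightarrow> real \<Rightarrow> real \<Rightarrow> real \<Rightarrow> real \<Rightarrow> real \<Rightarrow> real \<Rightarrow> real" where
 "pl p q s t s' t' x = (if x \<le> s then p + (x-p)*(s'-p)/(s-p) else if x \<le> t then s' + (x-s)*(t'-s')/(t-s) else t' + (x-t)*(q-t')/(q-t))"

context fixes p q s t s' t' :: real
  assumes o: "p<s" "s<t" "t<q" "p<s'" "s'<t'" "t'<q"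
begin

lemma pl_in: assumes "p < x" "x < q" shows "p < pl p q s t s' t' x" "pl p q s t s' t' x < q"
proof -
  consider "x \<le> s" | "s < x" "x \<le> t" | "t < x" by linarith
  then have "p < pl p q s t s' t' x \<and> pl p q s t s' t' x < q"
  proof cases
    case 1
    have "(x-p)*(s'-p)/(s-p) \<le> s' - p" using 1 o assms by (simp add: divide_simps mult_right_mono)
    moreover have "0 < (x-p)*(s'-p)/(s-p)" using o assms by simp
    ultimately show ?thesis using 1 o unfolding pl_def by auto
  next
    case 2
    have "(x-s)*(t'-s')/(t-s) \<le> t' - s'" using 2 o assms by (simp add: divide_simps mult_right_mono)
    moreover have "0 \<le> (x-s)*(t'-s')/(t-s)" using 2 o assms by simp
    moreover have "pl p q s t s' t' x = s' + (x-s)*(t'-s')/(t-s)" using 2 unfolding pl_def by auto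
    ultimately show ?thesis using 2 o by linarith
  next
    case 3
    have "(x-t)*(q-t')/(q-t) < q - t'" using 3 o assms by (simp add: divide_simps mult_strict_right_mono)
    moreover have "0 \<le> (x-t)*(q-t')/(q-t)" using 3 o assms by simp
    moreover have "pl p q s t s' t' x = t' + (x-t)*(q-t')/(q-t)" using 3 o unfolding pl_def by auto
    ultimately show ?thesis using 3 o by linarith
  qed
  then show "p < pl p q s t s' t' x" "pl p q s t s' t' x < q" by auto
qed

lemma pl_low: assumes "x \<le> s" shows "pl p q s t s' t' x \<le> s'"
proof -
  have "(x-p)*(s'-p)/(s-p) \<le> s' - p" using o assms by (simp add: divide_simps mult_right_mono)
  then show ?thesis using assms unfolding pl_def by auto
qed

lemma pl_high: assumes "t \<le> x" shows "t' \<le> pl p q s t s' t' x"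
proof (cases "x \<le> t")
  case True then have "x = t" using assms by auto
  then show ?thesis using o unfolding pl_def by (simp add: divide_simps)
next
  case False
  then show ?thesis using o assms unfolding pl_def by simp
qed

lemma pl_s: "pl p q s t s' t' s = s'" "pl p q s t s' t' t = t'"
  using o unfolding pl_def by (auto simp: divide_simps)

lemma pl_mono: assumes "x < y" shows "pl p q s t s' t' x < pl p q s t s' t' y"
proof -
  have A: "\<And>a b c d u v::real. a < b \<Longrightarrow> 0 < c \<Longrightarrow> 0 < d \<Longrightarrow> u + (a-v)*c/d < u + (b-v)*c/d"
    by (simp add: divide_strict_right_mono mult_strict_right_mono)
  consider "y \<le> s" | "x \<le> s" "s < y" "y \<le> t" | "x \<le> s" "t < y" | "s < x" "y \<le> t" | "s < x" "x \<le> t" "t < y" | "t < x"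
    using assms by linarith
  then show ?thesis
  proof cases
    case 1 then show ?thesis using A[OF assms, of "s'-p" "s-p" p p] o assms unfolding pl_def by auto
  next
    case 2
    have "pl p q s t s' t' x \<le> s'" using pl_low 2 by auto
    moreover have "s' < s' + (y-s)*(t'-s')/(t-s)" using 2 o by simp
    ultimately show ?thesis using 2 unfolding pl_def by auto
  next
    case 3
    have "pl p q s t s' t' x \<le> s'" using pl_low 3 by auto
    moreover have "t' < t' + (y-t)*(q-t')/(q-t)" using 3 o by simp
    moreover have "pl p q s t s' t' y = t' + (y-t)*(q-t')/(q-t)" using 3 o unfolding pl_def by auto
    ultimately show ?thesis using 3 o by linarith
  next
    case 4 then show ?thesis using A[OF assms, of "t'-s'" "t-s" s' s] o assms unfolding pl_def by auto
  next
    case 5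
    have "pl p q s t s' t' x \<le> t'"
    proof -
      have "(x-s)*(t'-s')/(t-s) \<le> t' - s'" using 5 o by (simp add: divide_simps mult_right_mono)
      then show ?thesis using 5 unfolding pl_def by auto
    qed
    moreover have "t' < t' + (y-t)*(q-t')/(q-t)" using 5 o by simp
    moreover have "pl p q s t s' t' y = t' + (y-t)*(q-t')/(q-t)" using 5 o unfolding pl_def by auto
    ultimately show ?thesis using 5 o by linarith
  next
    case 6 then show ?thesis using A[OF assms, of "q-t'" "q-t" t' t] o assms unfolding pl_def by auto
  qed
qed

lemma pl_inv: "pl p q s' t' s t (pl p q s t s' t' x) = x"
proof -
  consider "x \<le> s" | "s < x" "x \<le> t" | "t < x" by linarith
  then show ?thesis
  proof cases
    case 1
    have le: "pl p q s t s' t' x \<le> s'" using pl_low 1 by auto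
    show ?thesis using 1 o le unfolding pl_def[of p q s t s' t' x] by (simp add: pl_def divide_simps)
  next
    case 2
    have le1: "s' < pl p q s t s' t' x"
      using pl_mono[of s x] pl_s 2 by auto
    have le2: "pl p q s t s' t' x \<le> t'"
      using pl_mono[of x t] pl_s 2 by (cases "x = t") auto
    define y where "y = pl p q s t s' t' x"
    have ye: "y = s' + (x-s)*(t'-s')/(t-s)" using 2 unfolding y_def pl_def by auto
    have nz: "t - s \<noteq> 0" "t' - s' \<noteq> 0" using o by auto
    have "(y-s')*(t-s)/(t'-s') = ((x-s)*(t'-s')/(t-s))*(t-s)/(t'-s')" by (simp add: ye)
    also have "\<dots> = x - s" using nz by simp
    finally have "(y-s')*(t-s)/(t'-s') = x - s" .
    moreover have "pl p q s' t' s t y = s + (y-s')*(t-s)/(t'-s')" using le1 le2 o unfolding y_def pl_def by auto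
    ultimately show ?thesis unfolding y_def by simp
  next
    case 3
    have le: "t' < pl p q s t s' t' x"
      using pl_mono[of t x] pl_high[of t] 3 by auto
    define y where "y = pl p q s t s' t' x"
    have ye: "y = t' + (x-t)*(q-t')/(q-t)" using 3 o unfolding y_def pl_def by auto
    have nz: "q - t \<noteq> 0" "q - t' \<noteq> 0" using o by auto
    have "(y-t')*(q-t)/(q-t') = ((x-t)*(q-t')/(q-t))*(q-t)/(q-t')" by (simp add: ye)
    also have "\<dots> = x - t" using nz by simp
    finally have "(y-t')*(q-t)/(q-t') = x - t" .
    moreover have "pl p q s' t' s t y = t + (y-t')*(q-t)/(q-t')" using le o unfolding y_def pl_def by auto
    ultimately show ?thesis unfolding y_def by simp
  qed
qed



end

lemma mono_cont01:
  fixes f :: "real \<Rightarrow> real"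
  assumes sm: "strict_mono_on {0..1} f" and im: "f ` {0..1} = {0..1}"
  shows "continuous_on {0..1} f"
proof -
  define F where "F x = (if x \<in> {0..1} then f x else x)" for x
  have fle: "f x \<le> f y" if "x \<in> {0..1}" "y \<in> {0..1}" "x \<le> y" for x y
    using sm that by (metis order_le_less strict_mono_onD)
  have fin: "f x \<in> {0..1}" if "x \<in> {0..1}" for x using im that by blast
  have mono: "F x \<le> F y" if xy: "x \<le> y" for x y
  proof (cases "x \<in> {0..1}")
    case xin: True
    show ?thesis
    proof (cases "y \<in> {0..1}")
      case True then show ?thesis using xin xy fle unfolding F_def by simp
    next
      case False
      then have "1 < y" using xin xy by auto
      moreover have "f x \<le> 1" using fin[OF xin] by simp
      ultimately show ?thesis using xin False unfolding F_def by simp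
    qed
  next
    case xn: False
    show ?thesis
    proof (cases "y \<in> {0..1}")
      case True
      then have "x < 0" using xn xy by auto
      moreover have "0 \<le> f y" using fin[OF True] by simp
      ultimately show ?thesis using xn True unfolding F_def by simp
    next
      case False
      have "F x = x" "F y = y" using xn False unfolding F_def by auto
      then show ?thesis using xy by simp
    qed
  qed
  have "F ` UNIV = UNIV"
  proof -
    have "y \<in> range F" for y
    proof (cases "y \<in> {0..1}")
      case True
      then have "y \<in> f ` {0..1}" using im by simp
      then obtain x where x: "x \<in> {0..1}" "y = f x" by (rule imageE) simp
      then have "y = F x" unfolding F_def by simp
      then show ?thesis by (rule range_eqI)
    next
      case False
      then have "y = F y" unfolding F_def by auto
      then show ?thesis by (rule range_eqI)
    qed
    then show ?thesis by auto
  qed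
  then have "continuous_on UNIV F" by (intro continuous_onI_mono) (auto intro: mono)
  then have "continuous_on {0..1} F" by (rule continuous_on_subset) auto
  then show ?thesis by (rule continuous_on_cong[THEN iffD1, rotated 2]) (auto simp: F_def)
qed

lemma homeo01:
  fixes f :: "real \<Rightarrow> real"
  assumes sm: "strict_mono_on {0..1} f" and im: "f ` {0..1} = {0..1}"
  shows "\<exists>g. homeomorphism {0..1} {0..1} f g"
proof -
  define g where "g = inv_into {0..1} f"
  have inj: "inj_on f {0..1}" using sm strict_mono_on_imp_inj_on by blast
  have bij: "bij_betw f {0..1} {0..1}" using inj im by (simp add: bij_betw_def)
  have bijg: "bij_betw g {0..1} {0..1}" unfolding g_def by (rule bij_betw_inv_into[OF bij])
  have gim: "g ` {0..1} = {0..1}" using bijg by (simp add: bij_betw_def)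
  have gf: "\<forall>x\<in>{0..1}. g (f x) = x" unfolding g_def using inj by simp
  have fg: "\<forall>y\<in>{0..1}. f (g y) = y" unfolding g_def using im by (simp add: f_inv_into_f)
  have smg: "strict_mono_on {0..1} g"
  proof (rule strict_mono_onI)
    fix r s :: real assume rs: "r \<in> {0..1}" "s \<in> {0..1}" "r < s"
    then have gr: "g r \<in> {0..1}" "g s \<in> {0..1}" using gim by auto
    show "g r < g s"
    proof (rule ccontr)
      assume "\<not> g r < g s"
      then have "g s \<le> g r" by simp
      then have "f (g s) \<le> f (g r)" using sm gr by (metis order_le_less strict_mono_onD)
      then show False using fg rs by auto
    qed
  qed
  have "homeomorphism {0..1} {0..1} f g"
    unfolding homeomorphism_def using gf fg im gim mono_cont01[OF sm im] mono_cont01[OF smg gim]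
    by auto
  then show ?thesis by blast
qed

definition Lo :: "real set \<Rightarrow> real \<Rightarrow> real" where "Lo C x = Sup (C \<inter> {..x})"
definition Hi :: "real set \<Rightarrow> real \<Rightarrow> real" where "Hi C x = Inf (C \<inter> {x..})"
definition free :: "real set \<Rightarrow> real \<Rightarrow> real \<Rightarrow> real \<times> real" where
  "free K p q = (SOME st. p < fst st \<and> fst st < snd st \<and> snd st < q \<and> {fst st<..<snd st} \<inter> K = {})"
definition hmap :: "real set \<Rightarrow> real set \<Rightarrow> real \<Rightarrow> real \<Rightarrow> real" where
  "hmap C K \<epsilon> x = (if x \<in> C then x else
     (let p = Lo C x; q = Hi C x; st = free K p q; e = min ((q-p)/3) \<epsilon>
      in pl p q (fst st) (snd st) (p+e) (q-e) x))"

lemma free_prop: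
  assumes K: "closed K" "countable K" and pq: "p < q"
  shows "p < fst (free K p q) \<and> fst (free K p q) < snd (free K p q) \<and> snd (free K p q) < q
         \<and> {fst (free K p q)<..<snd (free K p q)} \<inter> K = {}"
proof -
  have "\<not> {p<..<q} \<subseteq> K"
    using pq K(2) uncountable_open_interval countable_subset by blast
  then obtain z where z: "p < z" "z < q" "z \<notin> K" by (meson greaterThanLessThan_iff subsetI)
  have "open (- K)" using K(1) by auto
  then obtain e where e: "e > 0" "ball z e \<subseteq> - K" using z(3) open_contains_ball by blast
  define d where "d = min e (min (z-p) (q-z)) / 2"
  have d: "d > 0" "d < e" "d < z - p" "d < q - z" using e z unfolding d_def by auto
  have "{z-d<..<z+d} \<inter> K = {}"
  proof -
    have "{z-d<..<z+d} \<subseteq> ball z e" using d by (auto simp: dist_real_def)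
    then show ?thesis using e by auto
  qed
  then have "\<exists>st. p < fst st \<and> fst st < snd st \<and> snd st < q \<and> {fst st<..<snd st} \<inter> K = {}"
    using d by (intro exI[of _ "(z-d, z+d)"]) auto
  then show ?thesis unfolding free_def by (rule someI_ex)
qed

context
  fixes C K :: "real set" and \<epsilon> :: real
  assumes C: "closed C" "C \<subseteq> {0..1}" "0 \<in> C" "1 \<in> C"
    and K: "closed K" "countable K" and ep: "\<epsilon> > 0"
begin

lemma gap1:
  assumes x: "x \<in> {0..1}" "x \<notin> C"
  shows "Lo C x \<in> C" "Lo C x < x" "Hi C x \<in> C" "x < Hi C x" "{Lo C x<..<Hi C x} \<inter> C = {}"
proof -
  have ne1: "C \<inter> {..x} \<noteq> {}" using C x by auto
  have ne2: "C \<inter> {x..} \<noteq> {}" using C x by auto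
  have b1: "bdd_above (C \<inter> {..x})" by (auto intro: bdd_aboveI2)
  have b2: "bdd_below (C \<inter> {x..})" by (auto intro: bdd_belowI2)
  show l: "Lo C x \<in> C" unfolding Lo_def using closed_subset_contains_Sup[OF C(1) _ ne1 b1] by auto
  have "Lo C x \<le> x" unfolding Lo_def using ne1 by (auto intro: cSup_least)
  then show "Lo C x < x" using l x by (auto simp: order_le_less)
  show h: "Hi C x \<in> C" unfolding Hi_def using closed_subset_contains_Inf[OF C(1) _ ne2 b2] by auto
  have "x \<le> Hi C x" unfolding Hi_def using ne2 by (auto intro: cInf_greatest)
  then show "x < Hi C x" using h x by (auto simp: order_le_less)
  show "{Lo C x<..<Hi C x} \<inter> C = {}"
  proof (rule ccontr)
    assume "{Lo C x<..<Hi C x} \<inter> C \<noteq> {}"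
    then obtain c where c: "c \<in> C" "Lo C x < c" "c < Hi C x" by auto
    show False
    proof (cases "c \<le> x")
      case True
      then have "c \<le> Lo C x" unfolding Lo_def using c b1 by (auto intro: cSup_upper)
      then show False using c by auto
    next
      case False
      then have "Hi C x \<le> c" unfolding Hi_def using c b2 by (auto intro: cInf_lower)
      then show False using c by auto
    qed
  qed
qed

lemma gap2:
  assumes pq: "p \<in> C" "q \<in> C" "p < z" "z < q" "{p<..<q} \<inter> C = {}"
  shows "Lo C z = p" "Hi C z = q" "z \<notin> C"
proof -
  show "z \<notin> C" using pq by auto
  have "C \<inter> {..z} \<subseteq> {..p}"
  proof
    fix c assume "c \<in> C \<inter> {..z}"
    then show "c \<in> {..p}" using pq by (auto simp: not_le) (meson greaterThanLessThan_iff le_less_trans linorder_not_le disjoint_iff)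
  qed
  then show "Lo C z = p" unfolding Lo_def using pq by (intro cSup_eq_maximum) auto
  have "C \<inter> {z..} \<subseteq> {q..}"
  proof
    fix c assume "c \<in> C \<inter> {z..}"
    then show "c \<in> {q..}" using pq by (auto simp: not_le) (meson greaterThanLessThan_iff less_le_trans linorder_not_le disjoint_iff)
  qed
  then show "Hi C z = q" unfolding Hi_def using pq by (intro cInf_eq_minimum) auto
qed


lemma gap_data:
  assumes "p \<in> C" "q \<in> C" "p < q"
  defines "st \<equiv> free K p q" and "e \<equiv> min ((q-p)/3) \<epsilon>"
  shows "p < fst st" "fst st < snd st" "snd st < q" "{fst st<..<snd st} \<inter> K = {}"
    "p < p + e" "p + e < q - e" "q - e < q" "e \<le> \<epsilon>"
proof -
  have e: "e \<le> (q-p)/3" "e \<le> \<epsilon>" "0 < e" using ep \<open>p<q\<close> unfolding e_def by (auto simp: min_def)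
  show "p < fst st" "fst st < snd st" "snd st < q" "{fst st<..<snd st} \<inter> K = {}"
    using free_prop[OF K \<open>p<q\<close>] unfolding st_def by auto
  show "p < p + e" "p + e < q - e" "q - e < q" "e \<le> \<epsilon>" using e \<open>p<q\<close> by auto
qed

lemma h_C: "x \<in> C \<Longrightarrow> hmap C K \<epsilon> x = x" unfolding hmap_def by simp

lemma h_gap:
  assumes x: "x \<in> {0..1}" "x \<notin> C"
  defines "p \<equiv> Lo C x" and "q \<equiv> Hi C x"
  defines "st \<equiv> free K p q" and "e \<equiv> min ((q-p)/3) \<epsilon>"
  shows "hmap C K \<epsilon> x = pl p q (fst st) (snd st) (p+e) (q-e) x"
    "p < hmap C K \<epsilon> x" "hmap C K \<epsilon> x < q"
proof -
  show eq: "hmap C K \<epsilon> x = pl p q (fst st) (snd st) (p+e) (q-e) x"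
    using x unfolding hmap_def p_def q_def st_def e_def Let_def by simp
  note g = gap1[OF x]
  have pq: "p < q" using g unfolding p_def q_def by auto
  note d = gap_data[OF g(1) g(3) pq[unfolded p_def q_def]]
  show "p < hmap C K \<epsilon> x" "hmap C K \<epsilon> x < q" unfolding eq
    using pl_in[of p "fst st" "snd st" q "p+e" "q-e" x] d g
    unfolding p_def q_def st_def e_def by auto
qed

lemma h_strict: "strict_mono_on {0..1} (hmap C K \<epsilon>)"
proof (rule strict_mono_onI)
  fix x y :: real assume xy: "x \<in> {0..1}" "y \<in> {0..1}" "x < y"
  have bA: "bdd_above (C \<inter> {..y})" by (auto intro: bdd_aboveI2)
  have bB: "bdd_below (C \<inter> {x..})" by (auto intro: bdd_belowI2)
  show "hmap C K \<epsilon> x < hmap C K \<epsilon> y"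
  proof (cases "x \<in> C")
    case xC: True
    show ?thesis
    proof (cases "y \<in> C")
      case True then show ?thesis using xC xy h_C by auto
    next
      case False
      have "x \<le> Lo C y" unfolding Lo_def using xC xy bA by (auto intro: cSup_upper)
      then show ?thesis using h_gap(2)[OF xy(2) False] h_C[OF xC] by auto
    qed
  next
    case xC: False
    show ?thesis
    proof (cases "y \<in> C")
      case True
      have "Hi C x \<le> y" unfolding Hi_def using True xy bB by (auto intro: cInf_lower)
      then show ?thesis using h_gap(3)[OF xy(1) xC] h_C[OF True] by auto
    next
      case yC: False
      note g = gap1[OF xy(1) xC]
      show ?thesis
      proof (cases "y < Hi C x")
        case True
        note g2 = gap2[OF g(1) g(3) _ True g(5)]
        have lo: "Lo C y = Lo C x" and hi: "Hi C y = Hi C x" using g2 g xy by auto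
        have pq: "Lo C x < Hi C x" using g by auto
        note d = gap_data[OF g(1) g(3) pq]
        show ?thesis
          unfolding h_gap(1)[OF xy(1) xC] h_gap(1)[OF xy(2) yC] lo hi
          by (rule pl_mono) (use d xy in auto)
      next
        case False
        then have "Hi C x \<le> Lo C y" unfolding Lo_def using g(3) bA by (auto intro: cSup_upper)
        then show ?thesis using h_gap(3)[OF xy(1) xC] h_gap(2)[OF xy(2) yC] by auto
      qed
    qed
  qed
qed

lemma h_image: "hmap C K \<epsilon> ` {0..1} = {0..1}"
proof
  show "hmap C K \<epsilon> ` {0..1} \<subseteq> {0..1}"
  proof
    fix y assume "y \<in> hmap C K \<epsilon> ` {0..1}"
    then obtain x where x: "x \<in> {0..1}" "y = hmap C K \<epsilon> x" by auto
    show "y \<in> {0..1}"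
    proof (cases "x \<in> C")
      case True then show ?thesis using x h_C by auto
    next
      case False
      note g = gap1[OF x(1) False]
      have "Lo C x \<in> {0..1}" "Hi C x \<in> {0..1}" using g C by auto
      then show ?thesis using h_gap(2,3)[OF x(1) False] x by auto
    qed
  qed
next
  show "{0..1} \<subseteq> hmap C K \<epsilon> ` {0..1}"
  proof
    fix y :: real assume y: "y \<in> {0..1}"
    show "y \<in> hmap C K \<epsilon> ` {0..1}"
    proof (cases "y \<in> C")
      case True then show ?thesis using y h_C by force
    next
      case False
      note g = gap1[OF y False]
      define p where "p = Lo C y"
      define q where "q = Hi C y"
      define st where "st = free K p q"
      define e where "e = min ((q-p)/3) \<epsilon>"
      have pq: "p < q" using g unfolding p_def q_def by auto
      note d = gap_data[OF g(1) g(3) pq[unfolded p_def q_def], folded p_def q_def, folded st_def e_def]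
      define x where "x = pl p q (p+e) (q-e) (fst st) (snd st) y"
      have xin: "p < x" "x < q" using pl_in[of p "p+e" "q-e" q "fst st" "snd st" y] d g
        unfolding x_def p_def q_def by auto
      note g2 = gap2[OF g(1) g(3) xin[unfolded p_def q_def] g(5)]
      have x01: "x \<in> {0..1}" using xin g C unfolding p_def q_def by auto
      have "hmap C K \<epsilon> x = pl p q (fst st) (snd st) (p+e) (q-e) x"
        using h_gap(1)[OF x01 g2(3)] unfolding g2(1,2) p_def q_def st_def e_def by simp
      also have "\<dots> = y" unfolding x_def
        by (rule pl_inv) (use d in auto)
      finally show ?thesis using x01 by force
    qed
  qed
qed

lemma h_close:
  assumes y: "y \<in> K" "y \<in> {0..1}"
  shows "infdist (hmap C K \<epsilon> y) C \<le> \<epsilon>"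
proof (cases "y \<in> C")
  case True then show ?thesis using h_C ep by simp
next
  case False
  note g = gap1[OF y(2) False]
  define p where "p = Lo C y"
  define q where "q = Hi C y"
  define st where "st = free K p q"
  define e where "e = min ((q-p)/3) \<epsilon>"
  have pq: "p < q" using g unfolding p_def q_def by auto
  note d = gap_data[OF g(1) g(3) pq[unfolded p_def q_def], folded p_def q_def, folded st_def e_def]
  have hy: "hmap C K \<epsilon> y = pl p q (fst st) (snd st) (p+e) (q-e) y"
    using h_gap(1)[OF y(2) False] unfolding p_def q_def st_def e_def by simp
  have yin: "p < y" "y < q" using g unfolding p_def q_def by auto
  have hin: "p < hmap C K \<epsilon> y" "hmap C K \<epsilon> y < q"
    using h_gap(2,3)[OF y(2) False] unfolding p_def q_def by auto
  have "y \<notin> {fst st<..<snd st}" using d y by auto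
  then consider "y \<le> fst st" | "snd st \<le> y" by fastforce
  then show ?thesis
  proof cases
    case 1
    have "hmap C K \<epsilon> y \<le> p + e" unfolding hy by (rule pl_low) (use d 1 in auto)
    then have "dist (hmap C K \<epsilon> y) p \<le> \<epsilon>" using hin d by (auto simp: dist_real_def)
    then show ?thesis using g(1) unfolding p_def by (rule infdist_le2[rotated])
  next
    case 2
    have "q - e \<le> hmap C K \<epsilon> y" unfolding hy by (rule pl_high) (use d 2 in auto)
    then have "dist (hmap C K \<epsilon> y) q \<le> \<epsilon>" using hin d by (auto simp: dist_real_def)
    then show ?thesis using g(3) unfolding q_def by (rule infdist_le2[rotated])
  qed
qed

end


lemma closed_union_near:
  fixes C :: "real set" and E :: "nat \<Rightarrow> real set"
  assumes C: "closed C" "C \<noteq> {}" and E: "\<And>n. closed (E n)"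
    and near: "\<And>n y. y \<in> E n \<Longrightarrow> infdist y C \<le> 1 / (real n + 1)"
  shows "closed (C \<union> (\<Union>n. E n))"
  unfolding closed_def open_dist
proof (intro ballI)
  fix x assume "x \<in> - (C \<union> (\<Union>n. E n))"
  then have xn: "x \<notin> C" "\<And>n. x \<notin> E n" by auto
  define r where "r = infdist x C"
  have r: "r > 0" using xn(1) C in_closed_iff_infdist_zero[OF C(1) C(2)] infdist_nonneg[of x C]
    unfolding r_def by (auto simp: order_le_less)
  obtain N :: nat where N: "inverse (real (Suc N)) < r/2" using r reals_Archimedean[of "r/2"] by auto
  define F where "F = C \<union> (\<Union>n<N. E n)"
  have "closed F" unfolding F_def using C E by (intro closed_Un closed_UN) auto
  moreover have "x \<notin> F" unfolding F_def using xn by auto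
  ultimately obtain e1 where e1: "e1 > 0" "\<And>y. dist y x < e1 \<Longrightarrow> y \<notin> F"
    unfolding closed_def open_dist by (metis ComplD ComplI)
  show "\<exists>e>0. \<forall>y. dist y x < e \<longrightarrow> y \<in> - (C \<union> (\<Union>n. E n))"
  proof (intro exI[of _ "min e1 (r/2)"] conjI allI impI)
    show "0 < min e1 (r/2)" using e1 r by auto
    fix y assume y: "dist y x < min e1 (r/2)"
    then have yF: "y \<notin> F" using e1 by auto
    have "y \<notin> E n" if "N \<le> n" for n
    proof
      assume yE: "y \<in> E n"
      have "r \<le> infdist y C + dist x y" unfolding r_def by (rule infdist_triangle)
      then have "r/2 < infdist y C" using y by (auto simp: dist_commute)
      moreover have "infdist y C \<le> 1 / (real n + 1)" using near yE by auto
      moreover have "1 / (real n + 1) \<le> inverse (real (Suc N))" using that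
        by (auto simp: field_simps)
      ultimately show False using N by linarith
    qed
    then show "y \<in> - (C \<union> (\<Union>n. E n))" using yF unfolding F_def by (auto simp: not_le) (metis lessThan_iff not_le)
  qed
qed


theorem mainTheorem11:
  shows "sigma_complete OPHomeo01 (\<lambda>f x. f x) CCIdeal"
  unfolding sigma_complete_def
proof (intro allI impI)
  fix a :: "real set" and b :: "nat \<Rightarrow> real set"
  assume a: "CCIdeal a" and bI: "\<forall>n. CCIdeal (b n)"
  obtain c0 where c0: "c0 \<subseteq> {0..1}" "countable c0" "closed c0" "a \<subseteq> c0"
    using a unfolding CCIdeal_def by blast
  have "\<forall>n. \<exists>c. c \<subseteq> {0..1} \<and> countable c \<and> closed c \<and> b n \<subseteq> c"
    using bI unfolding CCIdeal_def by blast
  then obtain K where K0: "\<forall>n. K n \<subseteq> {0..1} \<and> countable (K n) \<and> closed (K n) \<and> b n \<subseteq> K n"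
    by (rule choice[THEN exE]) blast
  have K: "\<And>n. K n \<subseteq> {0..1}" "\<And>n. countable (K n)" "\<And>n. closed (K n)" "\<And>n. b n \<subseteq> K n"
    using K0 by blast+
  have b01: "\<And>n. b n \<subseteq> {0..1}" using bI unfolding CCIdeal_def by blast
  define C where "C = c0 \<union> {0,1}"
  have C: "closed C" "C \<subseteq> {0..1}" "(0::real) \<in> C" "(1::real) \<in> C" "countable C"
    unfolding C_def using c0 by auto
  define g where "g n = hmap C (K n) (1 / (real n + 1))" for n
  have ep: "\<And>n::nat. (0::real) < 1 / (real n + 1)" by simp
  have sm: "\<And>n. strict_mono_on {0..1} (g n)" unfolding g_def
    using h_strict[OF C(1-4) K(3) K(2) ep] by blast
  have im: "\<And>n. g n ` {0..1} = {0..1}" unfolding g_def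
    using h_image[OF C(1-4) K(3) K(2) ep] by blast
  have hom: "\<And>n. \<exists>h. homeomorphism {0..1} {0..1} (g n) h" using homeo01[OF sm im] by blast
  have fixC: "\<And>n x. x \<in> C \<Longrightarrow> g n x = x" unfolding g_def
    using h_C[OF C(1-4) K(3) K(2) ep] by blast
  have cont: "continuous_on {0..1} (g n)" for n
  proof -
    obtain h where "homeomorphism {0..1} {0..1} (g n) h" using hom[of n] by blast
    then show ?thesis by (rule homeomorphism_cont1)
  qed
  define D where "D = C \<union> (\<Union>n. g n ` K n)"
  have clE: "closed (g n ` K n)" for n
  proof -
    have "bounded (K n)" by (rule bounded_subset[OF bounded_closed_interval K(1)[of n]])
    then have "compact (K n)" using K(3)[of n] by (simp add: compact_eq_bounded_closed)
    moreover have "continuous_on (K n) (g n)" by (rule continuous_on_subset[OF cont K(1)])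
    ultimately show ?thesis by (intro compact_imp_closed compact_continuous_image)
  qed
  have near: "infdist y C \<le> 1 / (real n + 1)" if yin: "y \<in> g n ` K n" for n y
  proof -
    obtain z where z: "z \<in> K n" "y = g n z" using yin by auto
    show ?thesis unfolding z(2) g_def
      by (rule h_close[OF C(1-4) K(3) K(2) ep z(1)]) (use z K(1)[of n] in auto)
  qed
  have clD: "closed D" unfolding D_def
    by (rule closed_union_near[OF C(1) _ clE near]) (use C in auto)
  have cD: "countable D" unfolding D_def
    by (intro countable_Un countable_UN countable_image) (auto simp: C K(2))
  have gK: "g n ` K n \<subseteq> {0..1}" for n using im[of n] K(1)[of n] by (metis image_mono)
  have D01: "D \<subseteq> {0..1}" unfolding D_def using C(2) gK by blast
  show "\<exists>g. (\<forall>n. g n \<in> pstab OPHomeo01 (\<lambda>f x. f x) a) \<and> CCIdeal (\<Union>n. g n ` b n)"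
  proof (intro exI[of _ g] conjI allI)
    fix n
    show "g n \<in> pstab OPHomeo01 (\<lambda>f x. f x) a"
    proof -
      have "g n \<in> OPHomeo01" unfolding OPHomeo01_def using hom[of n] sm[of n] by simp
      moreover have "\<forall>x\<in>a. g n x = x" using fixC c0(4) unfolding C_def by blast
      ultimately show ?thesis unfolding pstab_def by simp
    qed
  next
    have sub: "(\<Union>n. g n ` b n) \<subseteq> D" unfolding D_def using K(4) by blast
    have "(\<Union>n. g n ` b n) \<subseteq> {0..1}" using sub D01 by blast
    then show "CCIdeal (\<Union>n. g n ` b n)" unfolding CCIdeal_def
      by (intro conjI exI[of _ D]) (use sub D01 cD clD in auto)
  qed
qed

end
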